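(* Let $P_X$ be a distribution on a finite alphabet $\mathsf{X}$, $\mathsf{Y}$ a finite reconstruction alphabet, and $W_{X|Y}$ a conditional distribution of $X$ given $Y$. Let $$\mathcal{A}(P_X,W_{X|Y}):=\Big\{P_Y\in\mathcal{P}(\mathsf{Y}):\ \sum_{y}P_Y(y)W_{X|Y}(x|y)=P_X(x)\ \text{for all }x\in\mathsf{X}\Big\}$$ be non-empty, let $R^\star:=\min_{P_Y\in\mathcal{A}(P_X,W_{X|Y})}I(X;Y)$ (mutual information under $P_YW_{X|Y}$), and let $P_Y\in\mathcal{A}(P_X,W_{X|Y})$ attain this minimum. Consider a sequence of $(n,\Theta_n)$ lossy compression protocols (randomized encoders $\mathcal{E}^{(n)}(m|x^n)$ and randomized decoders $\mathcal{D}^{(n)}(y^n|m)$, $m\in[\Theta_n]$) with induced joint distributions $P_{X^nY^n}(x^n,y^n)=P_X^n(x^n)\sum_m\mathcal{E}^{(n)}(m|x^n)\mathcal{D}^{(n)}(y^n|m)$ such that $\lim_{n\to\infty}\frac1n\log\Theta_n=R^\star$ and $\lim_{n\to\infty}\|P_{X^nY^n}-P_{Y^n}W^n_{X|Y}\|_{\mathrm{TV}}=0$, where $P_{Y^n}$ is the $Y^n$-marginal of $P_{X^nY^n}$ and $W^n_{X|Y}(x^n|y^n)=\prod_iW_{X|Y}(x_i|y_i)$. Let $c>0$ be a constant and $b:\mathsf{X}\to\mathbb{R}$ a function, define the distortion $d(x,y)=-c\log_2W_{X|Y}(x|y)+b(x)$ and the level $D:=\mathbb{E}[d(X,Y)]$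 with respect to $P_YW_{X|Y}$. Then the same sequence of protocols achieves the Shannon rate-distortion function of the source $P_X$ with distortion $d$ at distortion level $D$; that is, $$\lim_{n\to\infty}\mathbb{E}\Big[\frac1n\sum_{i=1}^n d(X_i,Y_i)\Big]=D,$$ where the expectation is with respect to $P_{X^nY^n}$.
   Context: $\mathcal{P}(\mathsf{Y})$ denotes the set of probability distributions on $\mathsf{Y}$; $P_X^n$ is the i.i.d. product distribution; $\|\cdot\|_{\mathrm{TV}}$ is total variation distance. The Shannon rate-distortion function of $P_X$ with distortion $d$ at level $D$ is $\min\{I(X;Y):P_{Y|X},\ \mathbb{E}[d(X,Y)]\le D\}$. *)

theory Defs
  imports "HOL-Analysis.Analysis"
begin

definition is_pmf :: "('a::finite \<Rightarrow> real) \<Rightarrow> bool" where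
  "is_pmf p \<longleftrightarrow> (\<forall>a. 0 \<le> p a) \<and> (\<Sum>a\<in>UNIV. p a) = 1"

text \<open>Conditional distribution W(x|y), written W y x.\<close>
definition is_channel :: "('y::finite \<Rightarrow> 'x::finite \<Rightarrow> real) \<Rightarrow> bool" where
  "is_channel W \<longleftrightarrow> (\<forall>y. is_pmf (W y))"

definition compat_set :: "('x::finite \<Rightarrow> real) \<Rightarrow> ('y::finite \<Rightarrow> 'x \<Rightarrow> real) \<Rightarrow> ('y \<Rightarrow> real) set" where
  "compat_set PX W = {PY. is_pmf PY \<and> (\<forall>x. (\<Sum>y\<in>UNIV. PY y * W y x) = PX x)}"

definition mutual_info :: "('x::finite \<Rightarrow> 'y::finite \<Rightarrow> real) \<Rightarrow> real" where
  "mutual_info J = (\<Sum>x\<in>UNIV. \<Sum>y\<in>UNIV.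
      (if J x y = 0 then 0
       else J x y * log 2 (J x y / ((\<Sum>y'\<in>UNIV. J x y') * (\<Sum>x'\<in>UNIV. J x' y)))))"

definition MI_of :: "('y::finite \<Rightarrow> real) \<Rightarrow> ('y \<Rightarrow> 'x::finite \<Rightarrow> real) \<Rightarrow> real" where
  "MI_of PY W = mutual_info (\<lambda>x y. PY y * W y x)"

definition seqs :: "nat \<Rightarrow> 'a list set" where
  "seqs n = {xs. length xs = n}"

definition iid :: "('a \<Rightarrow> real) \<Rightarrow> 'a list \<Rightarrow> real" where
  "iid P xs = (\<Prod>i<length xs. P (xs ! i))"

definition prod_chan :: "('y \<Rightarrow> 'x \<Rightarrow> real) \<Rightarrow> 'y list \<Rightarrow> 'x list \<Rightarrow> real" where
  "prod_chan W ys xs = (\<Prod>i<length xs. W (ys ! i) (xs ! i))"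

definition is_protocol ::
  "nat \<Rightarrow> nat \<Rightarrow> ('x::finite list \<Rightarrow> nat \<Rightarrow> real) \<Rightarrow> (nat \<Rightarrow> 'y::finite list \<Rightarrow> real) \<Rightarrow> bool" where
  "is_protocol n \<Theta> E D \<longleftrightarrow> 0 < \<Theta> \<and>
     (\<forall>xs\<in>seqs n. (\<forall>m<\<Theta>. 0 \<le> E xs m) \<and> (\<Sum>m<\<Theta>. E xs m) = 1) \<and>
     (\<forall>m<\<Theta>. (\<forall>ys\<in>seqs n. 0 \<le> D m ys) \<and> (\<Sum>ys\<in>seqs n. D m ys) = 1)"

definition joint_dist ::
  "('x \<Rightarrow> real) \<Rightarrow> nat \<Rightarrow> ('x list \<Rightarrow> nat \<Rightarrow> real) \<Rightarrow> (nat \<Rightarrow> 'y list \<Rightarrow> real) \<Rightarrow> 'x list \<Rightarrow> 'y list \<Rightarrow> real" where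
  "joint_dist PX \<Theta> E D xs ys = iid PX xs * (\<Sum>m<\<Theta>. E xs m * D m ys)"

definition ymarg :: "nat \<Rightarrow> ('x list \<Rightarrow> 'y list \<Rightarrow> real) \<Rightarrow> 'y list \<Rightarrow> real" where
  "ymarg n J ys = (\<Sum>xs\<in>seqs n. J xs ys)"

definition tv_to_channel :: "nat \<Rightarrow> ('x list \<Rightarrow> 'y list \<Rightarrow> real) \<Rightarrow> ('y \<Rightarrow> 'x \<Rightarrow> real) \<Rightarrow> real" where
  "tv_to_channel n J W = (1/2) * (\<Sum>xs\<in>seqs n. \<Sum>ys\<in>seqs n.
       \<bar>J xs ys - ymarg n J ys * prod_chan W ys xs\<bar>)"

end

theory Submission
  imports Defs
begin

lemma finite_seqs: "finite (seqs n :: 'a::finite list set)"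
proof -
  have "seqs n = {xs::'a list. set xs \<subseteq> UNIV \<and> length xs = n}" by (auto simp: seqs_def)
  then show ?thesis using finite_lists_length_eq[of "UNIV::'a set" n] by simp
qed

lemma seqs_Suc: "seqs (Suc n) = (\<lambda>(x,xs). x#xs) ` (UNIV \<times> seqs n)"
  by (auto simp: seqs_def image_iff length_Suc_conv)

lemma seqs_0: "seqs 0 = {[]}" by (auto simp: seqs_def)

lemma sum_seqs_Suc:
  fixes F :: "'a::finite list \<Rightarrow> 'b::comm_monoid_add"
  shows "(\<Sum>xs\<in>seqs (Suc n). F xs) = (\<Sum>x\<in>UNIV. \<Sum>xs\<in>seqs n. F (x#xs))"
proof -
  have inj: "inj_on (\<lambda>(x,xs). x#xs) (UNIV \<times> seqs n)" by (auto simp: inj_on_def)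
  have "(\<Sum>xs\<in>seqs (Suc n). F xs) = (\<Sum>p\<in>UNIV \<times> seqs n. F ((\<lambda>(x,xs). x#xs) p))"
    unfolding seqs_Suc by (rule sum.reindex[OF inj, unfolded comp_def])
  also have "\<dots> = (\<Sum>x\<in>UNIV. \<Sum>xs\<in>seqs n. F (x#xs))"
    by (simp add: sum.cartesian_product case_prod_unfold)
  finally show ?thesis .
qed

lemma sum_seqs_prod:
  fixes f :: "nat \<Rightarrow> 'a::finite \<Rightarrow> real"
  shows "(\<Sum>xs\<in>seqs n. \<Prod>i<n. f i (xs!i)) = (\<Prod>i<n. \<Sum>x\<in>UNIV. f i x)"
proof (induction n arbitrary: f)
  case 0
  then show ?case by (simp add: seqs_0)
next
  case (Suc n)
  have "(\<Sum>xs\<in>seqs (Suc n). \<Prod>i<Suc n. f i (xs!i))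
      = (\<Sum>x\<in>UNIV. \<Sum>xs\<in>seqs n. f 0 x * (\<Prod>i<n. f (Suc i) (xs!i)))"
    by (simp only: sum_seqs_Suc prod.lessThan_Suc_shift nth_Cons_0 nth_Cons_Suc)
  also have "\<dots> = (\<Sum>x\<in>UNIV. f 0 x * (\<Prod>i<n. \<Sum>x\<in>UNIV. f (Suc i) x))"
    using Suc.IH[of "\<lambda>i. f (Suc i)"] by (simp add: sum_distrib_left[symmetric])
  also have "\<dots> = (\<Prod>i<Suc n. \<Sum>x\<in>UNIV. f i x)"
    by (simp only: prod.lessThan_Suc_shift sum_distrib_right)
  finally show ?case .
qed

lemma sum_seqs_marg:
  fixes f :: "nat \<Rightarrow> 'a::finite \<Rightarrow> real"
  assumes j: "j < n" and one: "\<And>i. i < n \<Longrightarrow> i \<noteq> j \<Longrightarrow> (\<Sum>x\<in>UNIV. f i x) = 1"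
  shows "(\<Sum>xs\<in>seqs n. (\<Prod>i<n. f i (xs!i)) * \<phi> (xs!j)) = (\<Sum>x\<in>UNIV. f j x * \<phi> x)"
proof -
  define f' where "f' i x = (if i = j then f i x * \<phi> x else f i x)" for i x
  have "(\<Prod>i<n. f' i (xs!i)) = (\<Prod>i<n. f i (xs!i)) * \<phi> (xs!j)" for xs
  proof -
    have "(\<Prod>i<n. f' i (xs!i)) = f' j (xs!j) * (\<Prod>i\<in>{..<n}-{j}. f' i (xs!i))"
      using j by (simp add: prod.remove)
    also have "(\<Prod>i\<in>{..<n}-{j}. f' i (xs!i)) = (\<Prod>i\<in>{..<n}-{j}. f i (xs!i))"
      by (rule prod.cong) (auto simp: f'_def)
    also have "(\<Prod>i<n. f i (xs!i)) = f j (xs!j) * (\<Prod>i\<in>{..<n}-{j}. f i (xs!i))"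
      using j by (simp add: prod.remove)
    ultimately show ?thesis by (simp add: f'_def)
  qed
  then have "(\<Sum>xs\<in>seqs n. (\<Prod>i<n. f i (xs!i)) * \<phi> (xs!j)) = (\<Prod>i<n. \<Sum>x\<in>UNIV. f' i x)"
    by (simp add: sum_seqs_prod[symmetric])
  also have "\<dots> = (\<Sum>x\<in>UNIV. f' j x) * (\<Prod>i\<in>{..<n}-{j}. \<Sum>x\<in>UNIV. f' i x)"
    using j by (simp add: prod.remove)
  also have "(\<Prod>i\<in>{..<n}-{j}. \<Sum>x\<in>UNIV. f' i x) = 1"
    by (rule prod.neutral) (auto simp: f'_def one)
  finally show ?thesis by (simp add: f'_def)
qed

lemma pmf_le1:
  assumes "is_pmf (p::'a::finite \<Rightarrow> real)" shows "0 \<le> p a" "p a \<le> 1"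
proof -
  show "0 \<le> p a" using assms by (simp add: is_pmf_def)
  have "p a \<le> (\<Sum>b\<in>UNIV. p b)" by (rule member_le_sum) (use assms in \<open>auto simp: is_pmf_def\<close>)
  then show "p a \<le> 1" using assms by (simp add: is_pmf_def)
qed

lemma compact_arg:
  fixes Q :: "nat \<Rightarrow> 'y::finite \<Rightarrow> real" and W :: "'y \<Rightarrow> 'x::finite \<Rightarrow> real" and g :: "'y \<Rightarrow> real"
  assumes pmf: "\<And>n. is_pmf (Q n)"
    and lim: "\<And>x. (\<lambda>n. \<Sum>y\<in>UNIV. Q n y * W y x) \<longlonglongrightarrow> PX x"
    and bnd: "\<And>Q'. Q' \<in> compat_set PX W \<Longrightarrow> (\<Sum>y\<in>UNIV. Q' y * g y) \<le> G"
    and e: "\<epsilon> > 0"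
  shows "eventually (\<lambda>n. (\<Sum>y\<in>UNIV. Q n y * g y) < G + \<epsilon>) sequentially"
proof (rule ccontr)
  assume ne: "\<not> ?thesis"
  from not_eventually_sequentiallyD[OF ne] obtain r :: "nat \<Rightarrow> nat" where
    r0: "strict_mono r \<and> (\<forall>k::nat. \<not> ((\<Sum>y\<in>UNIV. Q (r k) y * g y) < G + \<epsilon>))"
    by (elim exE)
  from r0 have r: "strict_mono r" "\<And>k. \<not> ((\<Sum>y\<in>UNIV. Q (r k) y * g y) < G + \<epsilon>)" by auto
  define v where "v k = (\<chi> y. Q (r k) y)" for k
  have "bounded (range v)"
    unfolding bounded_iff
  proof (intro exI ballI)
    fix z assume "z \<in> range v"
    then obtain k where z: "z = v k" by auto
    have "norm z \<le> (\<Sum>i\<in>UNIV. \<bar>z $ i\<bar>)" by (rule norm_le_l1_cart)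
    also have "\<dots> \<le> (\<Sum>i\<in>(UNIV::'y set). 1)"
      by (rule sum_mono) (use pmf_le1[OF pmf] in \<open>auto simp: z v_def\<close>)
    finally show "norm z \<le> real CARD('y)" by simp
  qed
  from compact_lemma_cart[OF this, of UNIV] obtain l r2 where r2: "strict_mono r2"
    "\<And>e. e > 0 \<Longrightarrow> eventually (\<lambda>n. \<forall>i\<in>UNIV. dist (v (r2 n) $ i) (l $ i) < e) sequentially"
    by blast
  define Q' where "Q' y = l $ y" for y
  define s where "s = r \<circ> r2"
  have s: "strict_mono s" using r(1) r2(1) by (simp add: s_def strict_mono_o)
  have conv: "(\<lambda>k. Q (s k) y) \<longlonglongrightarrow> Q' y" for y
    unfolding tendsto_iff
  proof (intro allI impI)
    fix e :: real assume "e > 0"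
    from r2(2)[OF this] show "eventually (\<lambda>k. dist (Q (s k) y) (Q' y) < e) sequentially"
      by eventually_elim (simp add: v_def s_def Q'_def)
  qed
  have "Q' \<in> compat_set PX W"
    unfolding compat_set_def is_pmf_def
  proof (intro CollectI conjI allI)
    fix y show "0 \<le> Q' y"
      by (rule LIMSEQ_le_const[OF conv]) (use pmf_le1[OF pmf] in auto)
  next
    have "(\<lambda>k. \<Sum>y\<in>UNIV. Q (s k) y) \<longlonglongrightarrow> (\<Sum>y\<in>UNIV. Q' y)"
      by (intro tendsto_sum conv)
    moreover have "(\<lambda>k. \<Sum>y\<in>UNIV. Q (s k) y) = (\<lambda>k. 1)" using pmf by (simp add: is_pmf_def)
    ultimately show "(\<Sum>y\<in>UNIV. Q' y) = 1" by (simp add: LIMSEQ_const_iff)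
  next
    fix x
    have "(\<lambda>k. \<Sum>y\<in>UNIV. Q (s k) y * W y x) \<longlonglongrightarrow> (\<Sum>y\<in>UNIV. Q' y * W y x)"
      by (intro tendsto_sum tendsto_mult_right conv)
    moreover have "(\<lambda>k. \<Sum>y\<in>UNIV. Q (s k) y * W y x) \<longlonglongrightarrow> PX x"
      using LIMSEQ_subseq_LIMSEQ[OF lim s] by (simp add: comp_def)
    ultimately show "(\<Sum>y\<in>UNIV. Q' y * W y x) = PX x" by (rule LIMSEQ_unique)
  qed
  then have le: "(\<Sum>y\<in>UNIV. Q' y * g y) \<le> G" by (rule bnd)
  have "(\<lambda>k. \<Sum>y\<in>UNIV. Q (s k) y * g y) \<longlonglongrightarrow> (\<Sum>y\<in>UNIV. Q' y * g y)"
    by (intro tendsto_sum tendsto_mult_right conv)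
  then have "G + \<epsilon> \<le> (\<Sum>y\<in>UNIV. Q' y * g y)"
    by (rule LIMSEQ_le_const) (use r(2) in \<open>auto simp: s_def not_less\<close>)
  with le e show False by simp
qed

lemma iid_seqs: "xs \<in> seqs n \<Longrightarrow> iid P xs = (\<Prod>i<n. P (xs!i))"
  by (simp add: seqs_def iid_def)

lemma prod_chan_seqs: "xs \<in> seqs n \<Longrightarrow> prod_chan W ys xs = (\<Prod>i<n. W (ys!i) (xs!i))"
  by (simp add: seqs_def prod_chan_def)

lemma iid_sum1:
  fixes P :: "'a::finite \<Rightarrow> real"
  assumes "is_pmf P" shows "(\<Sum>xs\<in>seqs n. iid P xs) = 1"
proof -
  have "(\<Sum>xs\<in>seqs n. iid P xs) = (\<Sum>xs\<in>seqs n. \<Prod>i<n. P (xs!i))"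
    by (rule sum.cong) (auto simp: iid_seqs)
  also have "\<dots> = 1" using assms sum_seqs_prod[of "\<lambda>i. P" n] by (simp add: is_pmf_def)
  finally show ?thesis .
qed

lemma iid_marg:
  fixes P :: "'a::finite \<Rightarrow> real"
  assumes "is_pmf P"
  shows "(\<Sum>xs\<in>seqs n. iid P xs * (\<Sum>i<n. \<phi> (xs!i))) = real n * (\<Sum>x\<in>UNIV. P x * \<phi> x)"
proof -
  have "(\<Sum>xs\<in>seqs n. iid P xs * (\<Sum>i<n. \<phi> (xs!i)))
      = (\<Sum>i<n. \<Sum>xs\<in>seqs n. (\<Prod>j<n. P (xs!j)) * \<phi> (xs!i))"
    by (subst sum.swap) (auto intro!: sum.cong simp: sum_distrib_left iid_seqs)
  also have "\<dots> = (\<Sum>i<n. \<Sum>x\<in>UNIV. P x * \<phi> x)"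
    by (rule sum.cong[OF refl], rule sum_seqs_marg) (use assms in \<open>auto simp: is_pmf_def\<close>)
  finally show ?thesis by simp
qed

lemma chan_sum1:
  fixes W :: "'y::finite \<Rightarrow> 'x::finite \<Rightarrow> real"
  assumes "is_channel W" shows "(\<Sum>xs\<in>seqs n. prod_chan W ys xs) = 1"
proof -
  have "(\<Sum>xs\<in>seqs n. prod_chan W ys xs) = (\<Sum>xs\<in>seqs n. \<Prod>i<n. W (ys!i) (xs!i))"
    by (rule sum.cong) (auto simp: prod_chan_seqs)
  also have "\<dots> = 1" using assms sum_seqs_prod[of "\<lambda>i x. W (ys!i) x" n] by (simp add: is_pmf_def is_channel_def)
  finally show ?thesis .
qed

lemma chan_marg:
  fixes W :: "'y::finite \<Rightarrow> 'x::finite \<Rightarrow> real"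
  assumes "is_channel W"
  shows "(\<Sum>xs\<in>seqs n. prod_chan W ys xs * (\<Sum>i<n. \<psi> (ys!i) (xs!i)))
       = (\<Sum>i<n. \<Sum>x\<in>UNIV. W (ys!i) x * \<psi> (ys!i) x)"
proof -
  have "(\<Sum>xs\<in>seqs n. prod_chan W ys xs * (\<Sum>i<n. \<psi> (ys!i) (xs!i)))
      = (\<Sum>i<n. \<Sum>xs\<in>seqs n. (\<Prod>j<n. W (ys!j) (xs!j)) * \<psi> (ys!i) (xs!i))"
    by (subst sum.swap) (auto intro!: sum.cong simp: sum_distrib_left prod_chan_seqs)
  also have "\<dots> = (\<Sum>i<n. \<Sum>x\<in>UNIV. W (ys!i) x * \<psi> (ys!i) x)"
    by (rule sum.cong[OF refl], rule sum_seqs_marg[where f="\<lambda>j x. W (ys!j) x"])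
       (use assms in \<open>auto simp: is_pmf_def is_channel_def\<close>)
  finally show ?thesis .
qed

lemma tv_bound:
  fixes J K F :: "'a \<Rightarrow> 'b \<Rightarrow> real"
  assumes "finite A" "finite B" "\<And>a b. a \<in> A \<Longrightarrow> b \<in> B \<Longrightarrow> \<bar>F a b\<bar> \<le> M"
  shows "\<bar>(\<Sum>a\<in>A. \<Sum>b\<in>B. J a b * F a b) - (\<Sum>a\<in>A. \<Sum>b\<in>B. K a b * F a b)\<bar>
         \<le> (\<Sum>a\<in>A. \<Sum>b\<in>B. \<bar>J a b - K a b\<bar>) * M"
proof -
  have "\<bar>(\<Sum>a\<in>A. \<Sum>b\<in>B. J a b * F a b) - (\<Sum>a\<in>A. \<Sum>b\<in>B. K a b * F a b)\<bar>
      = \<bar>\<Sum>a\<in>A. \<Sum>b\<in>B. (J a b - K a b) * F a b\<bar>"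
    by (simp add: sum_subtractf[symmetric] left_diff_distrib)
  also have "\<dots> \<le> (\<Sum>a\<in>A. \<bar>\<Sum>b\<in>B. (J a b - K a b) * F a b\<bar>)" by (rule sum_abs)
  also have "\<dots> \<le> (\<Sum>a\<in>A. \<Sum>b\<in>B. \<bar>(J a b - K a b) * F a b\<bar>)" by (intro sum_mono sum_abs)
  also have "\<dots> \<le> (\<Sum>a\<in>A. \<Sum>b\<in>B. \<bar>J a b - K a b\<bar> * M)"
    by (intro sum_mono) (auto simp: abs_mult intro!: mult_left_mono assms(3))
  also have "\<dots> = (\<Sum>a\<in>A. \<Sum>b\<in>B. \<bar>J a b - K a b\<bar>) * M"
    by (simp add: sum_distrib_right)
  finally show ?thesis .
qed

lemma key_ineq:
  fixes P s t Wn T :: real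
  assumes "P > 0" "s > 0" "s \<le> t" "Wn > 0" "T \<ge> 1"
  shows "P * s * (- log 2 Wn) \<ge> P * s * (- log 2 P) - P * s * log 2 T - ((t / T) * Wn) / ln 2"
proof -
  define J where "J = P * s"
  define R where "R = (t / T) * Wn"
  have J: "J > 0" using assms by (simp add: J_def)
  have t: "t > 0" using assms by simp
  have R: "R > 0" using assms t by (simp add: R_def)
  have "ln (R/J) \<le> R/J - 1" using J R by (intro ln_le_minus_one) simp
  then have "J * ln (R/J) \<le> J * (R/J - 1)" using J by (simp add: mult_left_mono)
  also have "\<dots> = R - J" using J by (simp add: field_simps)
  finally have 1: "J * ln (R/J) \<le> R - J" .
  have eq: "ln (R/J) = ln t - ln T + ln Wn - ln P - ln s"
    using assms t by (simp add: R_def J_def ln_div ln_mult)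
  have "ln s \<le> ln t" using assms by simp
  then have "J * (ln Wn - ln P - ln T) \<le> R"
    using 1 J R unfolding eq by (smt (verit) mult_left_mono)
  then have nn: "0 \<le> (R - J * (ln Wn - ln P - ln T)) / ln 2" by simp
  have "P * s * (- log 2 Wn) - (P * s * (- log 2 P) - P * s * log 2 T - ((t / T) * Wn) / ln 2)
       = (R - J * (ln Wn - ln P - ln T)) / ln 2"
    by (simp add: log_def J_def R_def field_simps)
  then show ?thesis using nn by linarith
qed

lemma MI_compat:
  fixes PX :: "'x::finite \<Rightarrow> real" and W :: "'y::finite \<Rightarrow> 'x \<Rightarrow> real"
  assumes W: "is_channel W" and Q: "Q \<in> compat_set PX W"
  shows "MI_of Q W = (\<Sum>x\<in>UNIV. - (PX x * log 2 (PX x)))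
                     - (\<Sum>y\<in>UNIV. Q y * (\<Sum>x\<in>UNIV. - (W y x * log 2 (W y x))))"
proof -
  have Qp: "is_pmf Q" and row: "\<And>x. (\<Sum>y\<in>UNIV. Q y * W y x) = PX x"
    using Q by (auto simp: compat_set_def)
  have Wn: "\<And>y x. 0 \<le> W y x" and Ws: "\<And>y. (\<Sum>x\<in>UNIV. W y x) = 1"
    using W by (auto simp: is_channel_def is_pmf_def)
  have Qn: "\<And>y. 0 \<le> Q y" using Qp by (auto simp: is_pmf_def)
  have col: "(\<Sum>x'\<in>UNIV. Q y * W y x') = Q y" for y by (simp add: sum_distrib_left[symmetric] Ws)
  have trm: "(if Q y * W y x = 0 then 0
       else Q y * W y x * log 2 (Q y * W y x / ((\<Sum>y'\<in>UNIV. Q y' * W y' x) * (\<Sum>x'\<in>UNIV. Q y * W y x'))))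
     = Q y * W y x * log 2 (W y x) - Q y * W y x * log 2 (PX x)" for x y
  proof (cases "Q y * W y x = 0")
    case True then show ?thesis by simp
  next
    case False
    then have q: "Q y > 0" and w: "W y x > 0" using Qn[of y] Wn[of y x] by (auto simp: less_le)
    have "Q y * W y x \<le> (\<Sum>y'\<in>UNIV. Q y' * W y' x)"
      by (rule member_le_sum) (auto intro: mult_nonneg_nonneg Qn Wn)
    then have p: "PX x > 0" using q w row[of x] by (smt (verit) mult_pos_pos)
    have "Q y * W y x / (PX x * Q y) = W y x / PX x" using q by simp
    then show ?thesis using False q w p
      by (simp add: row col log_divide right_diff_distrib)
  qed
  have "MI_of Q W = (\<Sum>x\<in>UNIV. \<Sum>y\<in>UNIV. Q y * W y x * log 2 (W y x) - Q y * W y x * log 2 (PX x))"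
    unfolding MI_of_def mutual_info_def using trm by simp
  also have "\<dots> = (\<Sum>y\<in>UNIV. Q y * (\<Sum>x\<in>UNIV. W y x * log 2 (W y x)))
                  - (\<Sum>x\<in>UNIV. (\<Sum>y\<in>UNIV. Q y * W y x) * log 2 (PX x))"
  proof -
    have 1: "(\<Sum>x\<in>UNIV. \<Sum>y\<in>UNIV. Q y * W y x * log 2 (W y x) - Q y * W y x * log 2 (PX x))
        = (\<Sum>x\<in>UNIV. \<Sum>y\<in>UNIV. Q y * W y x * log 2 (W y x)) - (\<Sum>x\<in>UNIV. \<Sum>y\<in>UNIV. Q y * W y x * log 2 (PX x))"
      by (simp only: sum_subtractf)
    have 2: "(\<Sum>x\<in>UNIV. \<Sum>y\<in>UNIV. Q y * W y x * log 2 (W y x)) = (\<Sum>y\<in>UNIV. \<Sum>x\<in>UNIV. Q y * W y x * log 2 (W y x))"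
      by (rule sum.swap)
    have 3: "(\<Sum>y\<in>UNIV. \<Sum>x\<in>UNIV. Q y * W y x * log 2 (W y x)) = (\<Sum>y\<in>UNIV. Q y * (\<Sum>x\<in>UNIV. W y x * log 2 (W y x)))"
      by (simp only: sum_distrib_left mult.assoc)
    have 4: "(\<Sum>x\<in>UNIV. \<Sum>y\<in>UNIV. Q y * W y x * log 2 (PX x)) = (\<Sum>x\<in>UNIV. (\<Sum>y\<in>UNIV. Q y * W y x) * log 2 (PX x))"
      by (simp only: sum_distrib_right)
    show ?thesis using 1 2 3 4 by simp
  qed
  also have "\<dots> = (\<Sum>x\<in>UNIV. - (PX x * log 2 (PX x)))
                     - (\<Sum>y\<in>UNIV. Q y * (\<Sum>x\<in>UNIV. - (W y x * log 2 (W y x))))"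
    by (simp add: row sum_negf)
  finally show ?thesis .
qed

lemma neglog_nonneg: "0 \<le> (p::real) \<Longrightarrow> p \<le> 1 \<Longrightarrow> 0 \<le> - log 2 p"
proof (cases "p = 0")
  case False
  assume "0 \<le> p" "p \<le> 1"
  then have "ln p \<le> 0" using False by simp
  then show ?thesis by (simp add: log_def divide_nonpos_pos)
qed (simp add: log_def)

lemma prot_facts:
  fixes PX :: "'x::finite \<Rightarrow> real" and E :: "'x list \<Rightarrow> nat \<Rightarrow> real" and D :: "nat \<Rightarrow> 'y::finite list \<Rightarrow> real"
  assumes P: "is_protocol n T E D" and PX: "is_pmf PX"
  shows prot_nonneg: "\<And>xs ys. xs \<in> seqs n \<Longrightarrow> ys \<in> seqs n \<Longrightarrow> 0 \<le> joint_dist PX T E D xs ys"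
    and prot_row: "\<And>xs. xs \<in> seqs n \<Longrightarrow> (\<Sum>ys\<in>seqs n. joint_dist PX T E D xs ys) = iid PX xs"
    and prot_E1: "\<And>xs m. xs \<in> seqs n \<Longrightarrow> m < T \<Longrightarrow> E xs m \<le> 1"
    and prot_sum: "(\<Sum>xs\<in>seqs n. \<Sum>ys\<in>seqs n. joint_dist PX T E D xs ys) = 1"
proof -
  have En: "\<And>xs m. xs \<in> seqs n \<Longrightarrow> m < T \<Longrightarrow> 0 \<le> E xs m"
    and Es: "\<And>xs. xs \<in> seqs n \<Longrightarrow> (\<Sum>m<T. E xs m) = 1"
    and Dn: "\<And>m ys. m < T \<Longrightarrow> ys \<in> seqs n \<Longrightarrow> 0 \<le> D m ys"
    and Ds: "\<And>m. m < T \<Longrightarrow> (\<Sum>ys\<in>seqs n. D m ys) = 1"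
    using P by (auto simp: is_protocol_def)
  have iidn: "0 \<le> iid PX xs" for xs
    using PX by (auto simp: iid_def is_pmf_def intro!: prod_nonneg)
  show "0 \<le> joint_dist PX T E D xs ys" if "xs \<in> seqs n" "ys \<in> seqs n" for xs ys
    unfolding joint_dist_def using that iidn En Dn
    by (intro mult_nonneg_nonneg sum_nonneg) auto
  show row: "(\<Sum>ys\<in>seqs n. joint_dist PX T E D xs ys) = iid PX xs" if "xs \<in> seqs n" for xs
  proof -
    have "(\<Sum>ys\<in>seqs n. joint_dist PX T E D xs ys) = iid PX xs * (\<Sum>ys\<in>seqs n. \<Sum>m<T. E xs m * D m ys)"
      unfolding joint_dist_def by (rule sum_distrib_left[symmetric])
    also have "\<dots> = iid PX xs * (\<Sum>m<T. \<Sum>ys\<in>seqs n. E xs m * D m ys)"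
      by (subst sum.swap) (rule refl)
    also have "\<dots> = iid PX xs * (\<Sum>m<T. E xs m * (\<Sum>ys\<in>seqs n. D m ys))"
      by (simp only: sum_distrib_left)
    also have "\<dots> = iid PX xs" using that Es Ds by simp
    finally show ?thesis .
  qed
  show "E xs m \<le> 1" if "xs \<in> seqs n" "m < T" for xs m
  proof -
    have "E xs m \<le> (\<Sum>m<T. E xs m)" by (rule member_le_sum) (use that En in auto)
    then show ?thesis using Es that by simp
  qed
  show "(\<Sum>xs\<in>seqs n. \<Sum>ys\<in>seqs n. joint_dist PX T E D xs ys) = 1"
    using row iid_sum1[OF PX, of n] by simp
qed

lemma log_prod_pos:
  fixes n :: nat
  assumes "\<And>i. i < n \<Longrightarrow> f i \<noteq> (0::real)"
  shows "log 2 (\<Prod>i<n. f i) = (\<Sum>i<n. log 2 (f i))"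
proof -
  have "ln (prod f {..<n}) = (\<Sum>i<n. ln (f i))" using assms by (intro ln_prod) auto
  then show ?thesis by (simp add: log_def sum_divide_distrib[symmetric])
qed

lemma lower_bound:
  fixes PX :: "'x::finite \<Rightarrow> real" and W :: "'y::finite \<Rightarrow> 'x \<Rightarrow> real"
    and E :: "'x list \<Rightarrow> nat \<Rightarrow> real" and D :: "nat \<Rightarrow> 'y list \<Rightarrow> real"
  assumes PX: "is_pmf PX" and W: "is_channel W" and P: "is_protocol n T E D"
  shows "real n * (\<Sum>x\<in>UNIV. - (PX x * log 2 (PX x))) - log 2 T - 1 / ln 2
          - 2 * tv_to_channel n (joint_dist PX T E D) W * (real n * (\<Sum>x\<in>UNIV. - log 2 (PX x)))
        \<le> (\<Sum>xs\<in>seqs n. \<Sum>ys\<in>seqs n. joint_dist PX T E D xs ys * (\<Sum>i<n. - log 2 (W (ys!i) (xs!i))))"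
proof -
  define J where "J = joint_dist PX T E D"
  define Wn where "Wn xs ys = prod_chan W ys xs" for xs ys
  define K where "K xs ys = ymarg n J ys * Wn xs ys" for xs ys
  define q where "q ys = (1 / real T) * (\<Sum>m<T. D m ys)" for ys
  define R where "R xs ys = q ys * Wn xs ys" for xs ys
  define hP where "hP xs = (\<Sum>i<n. - log 2 (PX (xs!i)))" for xs
  define L where "L xs ys = (\<Sum>i<n. - log 2 (W (ys!i) (xs!i)))" for xs ys
  define C1 where "C1 = (\<Sum>x\<in>UNIV. - log 2 (PX x))"
  define B where "B xs ys = (if Wn xs ys = 0 then \<bar>J xs ys - K xs ys\<bar> * (real n * C1) else 0)" for xs ys
  have T: "T > 0" and En: "\<And>xs m. xs \<in> seqs n \<Longrightarrow> m < T \<Longrightarrow> 0 \<le> E xs m"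
    and Dn: "\<And>m ys. m < T \<Longrightarrow> ys \<in> seqs n \<Longrightarrow> 0 \<le> D m ys"
    and Ds: "\<And>m. m < T \<Longrightarrow> (\<Sum>ys\<in>seqs n. D m ys) = 1"
    using P by (auto simp: is_protocol_def)
  have T1: "real T \<ge> 1" using T by simp
  have PXb: "0 \<le> PX x" "PX x \<le> 1" for x using pmf_le1[OF PX] by auto
  have Wb: "0 \<le> W y x" "W y x \<le> 1" for y x using pmf_le1[of "W y"] W by (auto simp: is_channel_def)
  have nl1: "0 \<le> - log 2 (PX x)" for x using PXb neglog_nonneg by blast
  have nl2: "0 \<le> - log 2 (W y x)" for y x using Wb neglog_nonneg by blast
  have C1b: "- log 2 (PX x) \<le> C1" for x
    unfolding C1_def by (rule member_le_sum) (use nl1 in auto)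
  have hPb: "0 \<le> hP xs" "hP xs \<le> real n * C1" for xs
  proof -
    show "0 \<le> hP xs" unfolding hP_def by (intro sum_nonneg nl1)
    have "hP xs \<le> (\<Sum>i<n. C1)" unfolding hP_def by (intro sum_mono C1b)
    then show "hP xs \<le> real n * C1" by simp
  qed
  have Lnn: "0 \<le> L xs ys" for xs ys unfolding L_def by (intro sum_nonneg nl2)
  have Wnn: "0 \<le> Wn xs ys" for xs ys
    unfolding Wn_def prod_chan_def by (intro prod_nonneg) (use Wb in auto)
  have qn: "ys \<in> seqs n \<Longrightarrow> 0 \<le> q ys" for ys
    unfolding q_def using Dn by (intro mult_nonneg_nonneg sum_nonneg) auto
  have Rn: "ys \<in> seqs n \<Longrightarrow> 0 \<le> R xs ys" for xs ys
    unfolding R_def using qn Wnn by (simp add: mult_nonneg_nonneg)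
  have Jn: "xs \<in> seqs n \<Longrightarrow> ys \<in> seqs n \<Longrightarrow> 0 \<le> J xs ys" for xs ys
    unfolding J_def by (rule prot_nonneg[OF P PX])
  have ln2: "ln (2::real) > 0" by simp
  have logT: "0 \<le> log 2 (real T)" using T1 by simp
  have pt: "J xs ys * hP xs - J xs ys * log 2 T - R xs ys / ln 2 - B xs ys \<le> J xs ys * L xs ys"
    if xs: "xs \<in> seqs n" and ys: "ys \<in> seqs n" for xs ys
  proof (cases "J xs ys = 0")
    case True
    have "0 \<le> R xs ys / ln 2" using Rn[OF ys] ln2 by simp
    moreover have "0 \<le> B xs ys" unfolding B_def using hPb C1b nl1 
      by (auto intro!: mult_nonneg_nonneg) (meson order_trans nl1 C1b)
    ultimately show ?thesis using True by simp
  next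
    case Jnz: False
    then have Jp: "J xs ys > 0" using Jn[OF xs ys] by simp
    show ?thesis
    proof (cases "Wn xs ys = 0")
      case True
      have K0: "K xs ys = 0" using True by (simp add: K_def)
      have h1: "J xs ys * hP xs \<le> J xs ys * (real n * C1)"
        by (rule mult_left_mono) (use Jp hPb in auto)
      have h2: "0 \<le> J xs ys * log 2 T" using Jp logT by simp
      have h3: "0 \<le> R xs ys / ln 2" using Rn[OF ys] ln2 by simp
      have h4: "0 \<le> J xs ys * L xs ys" using Jp Lnn by simp
      have h5: "B xs ys = J xs ys * (real n * C1)" using True K0 Jp by (simp add: B_def)
      show ?thesis using h1 h2 h3 h4 h5 by linarith
    next
      case Wnz: False
      then have Wp: "Wn xs ys > 0" using Wnn[of xs ys] by simp
      define s where "s = (\<Sum>m<T. E xs m * D m ys)"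
      define t where "t = (\<Sum>m<T. D m ys)"
      have Jeq: "J xs ys = iid PX xs * s" by (simp add: J_def joint_dist_def s_def)
      have iidn: "0 \<le> iid PX xs" using PXb by (auto simp: iid_def intro!: prod_nonneg)
      have sn: "0 \<le> s" unfolding s_def using En[OF xs] Dn[OF _ ys] by (auto intro!: sum_nonneg)
      have Pp: "iid PX xs > 0" and sp: "s > 0"
        using Jp iidn sn unfolding Jeq by (auto simp: zero_less_mult_iff less_le)
      have st: "s \<le> t" unfolding s_def t_def
        by (rule sum_mono) (use prot_E1[OF P PX xs] Dn[OF _ ys] En[OF xs] in \<open>auto intro: mult_left_le_one_le\<close>)
      have key: "iid PX xs * s * (- log 2 (Wn xs ys)) \<ge> iid PX xs * s * (- log 2 (iid PX xs))
                 - iid PX xs * s * log 2 T - ((t / T) * Wn xs ys) / ln 2"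
        by (rule key_ineq[OF Pp sp st Wp T1])
      have "Wn xs ys = (\<Prod>i<n. W (ys!i) (xs!i))" using xs by (simp add: Wn_def prod_chan_seqs)
      then have LW: "- log 2 (Wn xs ys) = L xs ys" using Wnz unfolding L_def
        by (simp add: log_prod_pos sum_negf)
      have "iid PX xs = (\<Prod>i<n. PX (xs!i))" using xs by (simp add: iid_seqs)
      moreover have "iid PX xs \<noteq> 0" using Pp by simp
      ultimately have hPW: "- log 2 (iid PX xs) = hP xs" unfolding hP_def
        by (simp add: log_prod_pos sum_negf)
      have Req: "R xs ys = (t / T) * Wn xs ys" by (simp add: R_def q_def t_def)
      have B0: "B xs ys = 0" using Wnz by (simp add: B_def)
      show ?thesis using key unfolding LW hPW Req[symmetric] Jeq[symmetric] B0 by simp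
    qed
  qed
  have le1: "(\<Sum>xs\<in>seqs n. \<Sum>ys\<in>seqs n. J xs ys * hP xs - J xs ys * log 2 T - R xs ys / ln 2 - B xs ys)
        \<le> (\<Sum>xs\<in>seqs n. \<Sum>ys\<in>seqs n. J xs ys * L xs ys)"
    by (intro sum_mono pt)
  have eq1: "(\<Sum>xs\<in>seqs n. \<Sum>ys\<in>seqs n. J xs ys * hP xs - J xs ys * log 2 T - R xs ys / ln 2 - B xs ys)
      = (\<Sum>xs\<in>seqs n. \<Sum>ys\<in>seqs n. J xs ys * hP xs) - (\<Sum>xs\<in>seqs n. \<Sum>ys\<in>seqs n. J xs ys) * log 2 T
        - (\<Sum>xs\<in>seqs n. \<Sum>ys\<in>seqs n. R xs ys) / ln 2 - (\<Sum>xs\<in>seqs n. \<Sum>ys\<in>seqs n. B xs ys)"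
    by (simp add: sum_subtractf sum_distrib_right sum_divide_distrib)
  have js: "(\<Sum>xs\<in>seqs n. \<Sum>ys\<in>seqs n. J xs ys) = 1"
    unfolding J_def by (rule prot_sum[OF P PX])
  have jh: "(\<Sum>xs\<in>seqs n. \<Sum>ys\<in>seqs n. J xs ys * hP xs) = real n * (\<Sum>x\<in>UNIV. - (PX x * log 2 (PX x)))"
  proof -
    have "(\<Sum>xs\<in>seqs n. \<Sum>ys\<in>seqs n. J xs ys * hP xs) = (\<Sum>xs\<in>seqs n. iid PX xs * hP xs)"
      by (rule sum.cong[OF refl]) (simp add: sum_distrib_right[symmetric] J_def prot_row[OF P PX])
    also have "\<dots> = real n * (\<Sum>x\<in>UNIV. PX x * - log 2 (PX x))"
      unfolding hP_def by (rule iid_marg[OF PX])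
    finally show ?thesis by simp
  qed
  have rs: "(\<Sum>xs\<in>seqs n. \<Sum>ys\<in>seqs n. R xs ys) = 1"
  proof -
    have "(\<Sum>xs\<in>seqs n. \<Sum>ys\<in>seqs n. R xs ys) = (\<Sum>ys\<in>seqs n. q ys * (\<Sum>xs\<in>seqs n. Wn xs ys))"
      by (subst sum.swap) (simp add: R_def sum_distrib_left)
    also have "\<dots> = (\<Sum>ys\<in>seqs n. q ys)" by (simp add: Wn_def chan_sum1[OF W])
    also have "\<dots> = (1 / real T) * (\<Sum>m<T. \<Sum>ys\<in>seqs n. D m ys)"
      by (simp add: q_def sum_divide_distrib[symmetric] sum.swap[of _ "seqs n"])
    also have "\<dots> = 1" using Ds T by simp
    finally show ?thesis .
  qed
  have bb: "(\<Sum>xs\<in>seqs n. \<Sum>ys\<in>seqs n. B xs ys)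
      \<le> 2 * tv_to_channel n (joint_dist PX T E D) W * (real n * C1)"
  proof -
    have nC: "0 \<le> real n * C1" using hPb(1)[of "[]"] hPb(2)[of "[]"] by linarith
    have "(\<Sum>xs\<in>seqs n. \<Sum>ys\<in>seqs n. B xs ys) \<le> (\<Sum>xs\<in>seqs n. \<Sum>ys\<in>seqs n. \<bar>J xs ys - K xs ys\<bar> * (real n * C1))"
      by (intro sum_mono) (auto simp: B_def intro!: mult_nonneg_nonneg nC)
    also have "\<dots> = 2 * tv_to_channel n (joint_dist PX T E D) W * (real n * C1)"
      by (simp add: tv_to_channel_def K_def Wn_def J_def sum_distrib_right)
    finally show ?thesis .
  qed
  have fin: "real n * (\<Sum>x\<in>UNIV. - (PX x * log 2 (PX x))) - log 2 T - 1 / ln 2 - (\<Sum>xs\<in>seqs n. \<Sum>ys\<in>seqs n. B xs ys)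
      \<le> (\<Sum>xs\<in>seqs n. \<Sum>ys\<in>seqs n. J xs ys * L xs ys)"
    using le1[unfolded eq1 js jh rs] by simp
  show ?thesis using fin bb unfolding J_def L_def C1_def by linarith
qed




lemma tendsto_by_bound:
  fixes f g :: "nat \<Rightarrow> real"
  assumes "eventually (\<lambda>n. \<bar>f n - l\<bar> \<le> g n) sequentially" "g \<longlonglongrightarrow> 0"
  shows "f \<longlonglongrightarrow> l"
proof -
  have "(\<lambda>n. f n - l) \<longlonglongrightarrow> 0"
    by (rule Lim_null_comparison[OF _ assms(2)]) (use assms(1) in simp)
  then show ?thesis by (rule LIM_zero_cancel)
qed

lemma count_sum:
  fixes h :: "'y::finite \<Rightarrow> real"
  shows "(\<Sum>y\<in>UNIV. (\<Sum>i<n. if ys!i = y then 1 else 0) * h y) = (\<Sum>i<n. h (ys!i))"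
proof -
  have "(\<Sum>y\<in>UNIV. (\<Sum>i<n. if ys!i = y then 1 else 0) * h y) = (\<Sum>y\<in>UNIV. \<Sum>i<n. (if ys!i = y then h y else 0))"
    by (auto simp: sum_distrib_right intro!: sum.cong)
  also have "\<dots> = (\<Sum>i<n. \<Sum>y\<in>UNIV. (if ys!i = y then h y else 0))" by (rule sum.swap)
  also have "\<dots> = (\<Sum>i<n. h (ys!i))" by simp
  finally show ?thesis .
qed

lemma mult_ind: "(a::real) * (if P then 1 else 0) = (if P then a else 0)" by simp

theorem theorem4:
  fixes PX :: "'x::finite \<Rightarrow> real"
    and W :: "'y::finite \<Rightarrow> 'x \<Rightarrow> real"
    and PY :: "'y \<Rightarrow> real"
    and \<Theta> :: "nat \<Rightarrow> nat"
    and E :: "nat \<Rightarrow> 'x list \<Rightarrow> nat \<Rightarrow> real"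
    and D :: "nat \<Rightarrow> nat \<Rightarrow> 'y list \<Rightarrow> real"
    and c :: real
    and b :: "'x \<Rightarrow> real"
  assumes PX: "is_pmf PX"
    and W: "is_channel W"
    and PY_in: "PY \<in> compat_set PX W"
    and PY_min: "\<forall>Q\<in>compat_set PX W. MI_of PY W \<le> MI_of Q W"
    and prot: "\<forall>n. is_protocol n (\<Theta> n) (E n) (D n)"
    and rate: "(\<lambda>n. log 2 (real (\<Theta> n)) / real n) \<longlonglongrightarrow> MI_of PY W"
    and tv: "(\<lambda>n. tv_to_channel n (joint_dist PX (\<Theta> n) (E n) (D n)) W) \<longlonglongrightarrow> 0"
    and c: "c > 0"
  shows "(\<lambda>n. \<Sum>xs\<in>seqs n. \<Sum>ys\<in>seqs n.
            joint_dist PX (\<Theta> n) (E n) (D n) xs ys *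
            ((1 / real n) * (\<Sum>i<n. - c * log 2 (W (ys ! i) (xs ! i)) + b (xs ! i))))
         \<longlonglongrightarrow> (\<Sum>x\<in>UNIV. \<Sum>y\<in>UNIV. PY y * W y x * (- c * log 2 (W y x) + b x))"
proof -
  define J where "J n = joint_dist PX (\<Theta> n) (E n) (D n)" for n
  define PYn where "PYn n ys = ymarg n (J n) ys" for n ys
  define K where "K n xs ys = PYn n ys * prod_chan W ys xs" for n xs ys
  define tvn where "tvn n = tv_to_channel n (J n) W" for n
  define L where "L n xs ys = (\<Sum>i<n. - log 2 (W (ys!i) (xs!i)))" for n xs ys
  define a where "a n = (1 / real n) * (\<Sum>xs\<in>seqs n. \<Sum>ys\<in>seqs n. J n xs ys * L n xs ys)" for n
  define gf where "gf y = (\<Sum>x\<in>UNIV. - (W y x * log 2 (W y x)))" for y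
  define G where "G = (\<Sum>y\<in>UNIV. PY y * gf y)"
  define HX where "HX = (\<Sum>x\<in>UNIV. - (PX x * log 2 (PX x)))"
  define C1 where "C1 = (\<Sum>x\<in>UNIV. - log 2 (PX x))"
  define C2 where "C2 = (\<Sum>y\<in>UNIV. \<Sum>x\<in>UNIV. - log 2 (W y x))"
  define Qn where "Qn n y = (if n = 0 then PY y else (1 / real n) *
      (\<Sum>ys\<in>seqs n. PYn n ys * (\<Sum>i<n. if ys!i = y then 1 else 0)))" for n y
  have protn: "is_protocol n (\<Theta> n) (E n) (D n)" for n using prot by blast
  have PYp: "is_pmf PY" using PY_in by (simp add: compat_set_def)
  have PXb: "0 \<le> PX x" "PX x \<le> 1" for x using pmf_le1[OF PX] by auto
  have Wb: "0 \<le> W y x" "W y x \<le> 1" for y x using pmf_le1[of "W y"] W by (auto simp: is_channel_def)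
  have nl1: "0 \<le> - log 2 (PX x)" for x using PXb neglog_nonneg by blast
  have nl2: "0 \<le> - log 2 (W y x)" for y x using Wb neglog_nonneg by blast
  have C1nn: "0 \<le> C1" unfolding C1_def by (intro sum_nonneg nl1)
  have C2b: "- log 2 (W y x) \<le> C2" for y x
  proof -
    have "- log 2 (W y x) \<le> (\<Sum>x\<in>UNIV. - log 2 (W y x))" by (rule member_le_sum) (use nl2 in auto)
    also have "\<dots> \<le> C2" unfolding C2_def by (rule member_le_sum) (use nl2 in \<open>auto intro: sum_nonneg\<close>)
    finally show ?thesis .
  qed
  have C2nn: "0 \<le> C2" using nl2 C2b order_trans by blast
  have Jn: "0 \<le> J n xs ys" if "xs \<in> seqs n" "ys \<in> seqs n" for n xs ys
    unfolding J_def by (rule prot_nonneg[OF protn PX that])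
  have Jrow: "(\<Sum>ys\<in>seqs n. J n xs ys) = iid PX xs" if "xs \<in> seqs n" for n xs
    unfolding J_def by (rule prot_row[OF protn PX that])
  have Jmarg: "(\<Sum>xs\<in>seqs n. \<Sum>ys\<in>seqs n. J n xs ys * (\<Sum>i<n. \<phi> (xs!i))) = real n * (\<Sum>x\<in>UNIV. PX x * \<phi> x)"
    for n \<phi>
  proof -
    have "(\<Sum>xs\<in>seqs n. \<Sum>ys\<in>seqs n. J n xs ys * (\<Sum>i<n. \<phi> (xs!i)))
        = (\<Sum>xs\<in>seqs n. iid PX xs * (\<Sum>i<n. \<phi> (xs!i)))"
      by (rule sum.cong[OF refl]) (simp add: sum_distrib_right[symmetric] Jrow)
    also have "\<dots> = real n * (\<Sum>x\<in>UNIV. PX x * \<phi> x)" by (rule iid_marg[OF PX])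
    finally show ?thesis .
  qed
  have PYnn: "0 \<le> PYn n ys" if "ys \<in> seqs n" for n ys
    unfolding PYn_def ymarg_def using that by (auto intro!: sum_nonneg Jn)
  have PYs: "(\<Sum>ys\<in>seqs n. PYn n ys) = 1" for n
    unfolding PYn_def ymarg_def J_def by (subst sum.swap) (rule prot_sum[OF protn PX])
  have Kmarg: "(\<Sum>xs\<in>seqs n. \<Sum>ys\<in>seqs n. K n xs ys * (\<Sum>i<n. \<psi> (ys!i) (xs!i)))
      = (\<Sum>ys\<in>seqs n. PYn n ys * (\<Sum>i<n. \<Sum>x\<in>UNIV. W (ys!i) x * \<psi> (ys!i) x))" for n \<psi>
  proof -
    have "(\<Sum>xs\<in>seqs n. \<Sum>ys\<in>seqs n. K n xs ys * (\<Sum>i<n. \<psi> (ys!i) (xs!i)))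
        = (\<Sum>ys\<in>seqs n. \<Sum>xs\<in>seqs n. K n xs ys * (\<Sum>i<n. \<psi> (ys!i) (xs!i)))" by (rule sum.swap)
    also have "\<dots> = (\<Sum>ys\<in>seqs n. PYn n ys * (\<Sum>xs\<in>seqs n. prod_chan W ys xs * (\<Sum>i<n. \<psi> (ys!i) (xs!i))))"
      by (simp add: K_def sum_distrib_left mult.assoc)
    also have "\<dots> = (\<Sum>ys\<in>seqs n. PYn n ys * (\<Sum>i<n. \<Sum>x\<in>UNIV. W (ys!i) x * \<psi> (ys!i) x))"
      by (simp add: chan_marg[OF W])
    finally show ?thesis .
  qed
  have TVb: "\<bar>(\<Sum>xs\<in>seqs n. \<Sum>ys\<in>seqs n. J n xs ys * F xs ys) - (\<Sum>xs\<in>seqs n. \<Sum>ys\<in>seqs n. K n xs ys * F xs ys)\<bar>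
      \<le> 2 * tvn n * M" if "\<And>xs ys. xs \<in> seqs n \<Longrightarrow> ys \<in> seqs n \<Longrightarrow> \<bar>F xs ys\<bar> \<le> M" for n F M
  proof -
    have "(\<Sum>xs\<in>seqs n. \<Sum>ys\<in>seqs n. \<bar>J n xs ys - K n xs ys\<bar>) = 2 * tvn n"
      by (simp add: tvn_def tv_to_channel_def K_def PYn_def)
    moreover have "\<bar>(\<Sum>xs\<in>seqs n. \<Sum>ys\<in>seqs n. J n xs ys * F xs ys) - (\<Sum>xs\<in>seqs n. \<Sum>ys\<in>seqs n. K n xs ys * F xs ys)\<bar>
      \<le> (\<Sum>xs\<in>seqs n. \<Sum>ys\<in>seqs n. \<bar>J n xs ys - K n xs ys\<bar>) * M"
      by (rule tv_bound) (auto intro: finite_seqs that)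
    ultimately show ?thesis by simp
  qed
  have tv0: "tvn \<longlonglongrightarrow> 0" using tv unfolding tvn_def J_def .
  have Qlin: "(\<Sum>y\<in>UNIV. Qn n y * h y) = (1 / real n) * (\<Sum>ys\<in>seqs n. PYn n ys * (\<Sum>i<n. h (ys!i)))"
    if "n > 0" for n h
  proof -
    have "(\<Sum>y\<in>UNIV. Qn n y * h y)
        = (1 / real n) * (\<Sum>y\<in>UNIV. \<Sum>ys\<in>seqs n. PYn n ys * ((\<Sum>i<n. if ys!i = y then 1 else 0) * h y))"
      using that by (simp add: Qn_def sum_distrib_left sum_distrib_right mult.assoc)
    also have "\<dots> = (1 / real n) * (\<Sum>ys\<in>seqs n. \<Sum>y\<in>UNIV. PYn n ys * ((\<Sum>i<n. if ys!i = y then 1 else 0) * h y))"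
      by (subst sum.swap) (rule refl)
    also have "\<dots> = (1 / real n) * (\<Sum>ys\<in>seqs n. PYn n ys * (\<Sum>i<n. h (ys!i)))"
      by (simp only: sum_distrib_left[symmetric] count_sum)
    finally show ?thesis .
  qed
  have Qpmf: "is_pmf (Qn n)" for n
  proof (cases "n = 0")
    case True then show ?thesis using PYp by (simp add: Qn_def is_pmf_def)
  next
    case False
    have "(\<Sum>y\<in>UNIV. Qn n y) = (\<Sum>y\<in>UNIV. Qn n y * 1)" by simp
    also have "\<dots> = 1" using False by (simp only: Qlin) (simp add: sum_distrib_right[symmetric] PYs)
    finally have s1: "(\<Sum>y\<in>UNIV. Qn n y) = 1" .
    have "0 \<le> Qn n y" for y
    proof -
      have "0 \<le> (\<Sum>ys\<in>seqs n. PYn n ys * (\<Sum>i<n. if ys ! i = y then 1 else (0::real)))"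
        by (intro sum_nonneg mult_nonneg_nonneg PYnn) auto
      then show ?thesis using False unfolding Qn_def by simp
    qed
    with s1 show ?thesis by (simp add: is_pmf_def)
  qed
  have QW: "(\<lambda>n. \<Sum>y\<in>UNIV. Qn n y * W y x) \<longlonglongrightarrow> PX x" for x
  proof (rule tendsto_by_bound)
    show "(\<lambda>n. 2 * tvn n) \<longlonglongrightarrow> 0" using tendsto_mult_right_zero[OF tv0, of 2] by simp
    show "eventually (\<lambda>n. \<bar>(\<Sum>y\<in>UNIV. Qn n y * W y x) - PX x\<bar> \<le> 2 * tvn n) sequentially"
      using eventually_gt_at_top[of 0]
    proof eventually_elim
      case (elim n)
      define F where "F xs ys = (\<Sum>i<n. if xs!i = x then 1 else (0::real))" for xs :: "'x list" and ys :: "'y list"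
      have Fb: "\<bar>F xs ys\<bar> \<le> real n" for xs ys
      proof -
        have "0 \<le> F xs ys" unfolding F_def by (intro sum_nonneg) auto
        moreover have "F xs ys \<le> (\<Sum>i<n. 1)" unfolding F_def by (intro sum_mono) auto
        ultimately show ?thesis by simp
      qed
      have e1: "(\<Sum>y\<in>UNIV. Qn n y * W y x) = (1 / real n) * (\<Sum>xs\<in>seqs n. \<Sum>ys\<in>seqs n. K n xs ys * F xs ys)"
        unfolding Qlin[OF elim] F_def Kmarg[of n "\<lambda>y x'. if x' = x then 1 else 0", simplified] by (simp add: mult_ind)
      have e2: "PX x = (1 / real n) * (\<Sum>xs\<in>seqs n. \<Sum>ys\<in>seqs n. J n xs ys * F xs ys)"
        unfolding F_def Jmarg[of n "\<lambda>x'. if x' = x then 1 else 0", simplified] using elim by (simp add: mult_ind)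
      have "\<bar>(\<Sum>y\<in>UNIV. Qn n y * W y x) - PX x\<bar>
          = (1 / real n) * \<bar>(\<Sum>xs\<in>seqs n. \<Sum>ys\<in>seqs n. J n xs ys * F xs ys) - (\<Sum>xs\<in>seqs n. \<Sum>ys\<in>seqs n. K n xs ys * F xs ys)\<bar>"
      proof -
        have "(1 / real n) * (\<Sum>xs\<in>seqs n. \<Sum>ys\<in>seqs n. K n xs ys * F xs ys) - (1 / real n) * (\<Sum>xs\<in>seqs n. \<Sum>ys\<in>seqs n. J n xs ys * F xs ys)
            = - ((1 / real n) * ((\<Sum>xs\<in>seqs n. \<Sum>ys\<in>seqs n. J n xs ys * F xs ys) - (\<Sum>xs\<in>seqs n. \<Sum>ys\<in>seqs n. K n xs ys * F xs ys)))"
          by (simp only: right_diff_distrib minus_diff_eq)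
        then show ?thesis unfolding e1 e2 abs_minus_cancel abs_mult by simp
      qed
      also have "\<dots> \<le> (1 / real n) * (2 * tvn n * real n)"
        by (intro mult_left_mono TVb Fb) auto
      also have "\<dots> = 2 * tvn n" using elim by simp
      finally show ?case .
    qed
  qed
  have MIc: "MI_of Q W = HX - (\<Sum>y\<in>UNIV. Q y * gf y)" if "Q \<in> compat_set PX W" for Q
    using MI_compat[OF W that] by (simp add: HX_def gf_def)
  have bnd: "(\<Sum>y\<in>UNIV. Q' y * gf y) \<le> G" if "Q' \<in> compat_set PX W" for Q'
    using PY_min that MIc[OF that] MIc[OF PY_in] by (auto simp: G_def)
  have Rst: "MI_of PY W = HX - G" using MIc[OF PY_in] by (simp add: G_def)
  have up: "a n \<le> (\<Sum>y\<in>UNIV. Qn n y * gf y) + 2 * C2 * tvn n" if "n > 0" for n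
  proof -
    have Lb: "\<bar>L n xs ys\<bar> \<le> real n * C2" for xs ys
    proof -
      have "0 \<le> L n xs ys" unfolding L_def by (intro sum_nonneg nl2)
      moreover have "L n xs ys \<le> (\<Sum>i<n. C2)" unfolding L_def by (intro sum_mono C2b)
      ultimately show ?thesis by simp
    qed
    have KL: "(\<Sum>xs\<in>seqs n. \<Sum>ys\<in>seqs n. K n xs ys * L n xs ys) = (\<Sum>ys\<in>seqs n. PYn n ys * (\<Sum>i<n. gf (ys!i)))"
      unfolding L_def Kmarg[of n "\<lambda>y x. - log 2 (W y x)", simplified] by (simp add: gf_def)
    have "(\<Sum>xs\<in>seqs n. \<Sum>ys\<in>seqs n. J n xs ys * L n xs ys)
        \<le> (\<Sum>xs\<in>seqs n. \<Sum>ys\<in>seqs n. K n xs ys * L n xs ys) + 2 * tvn n * (real n * C2)"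
      using TVb[of n "L n" "real n * C2", OF Lb] by linarith
    then have "a n \<le> (1 / real n) * ((\<Sum>ys\<in>seqs n. PYn n ys * (\<Sum>i<n. gf (ys!i))) + 2 * tvn n * (real n * C2))"
      unfolding a_def KL by (intro mult_left_mono) auto
    also have "\<dots> = (\<Sum>y\<in>UNIV. Qn n y * gf y) + 2 * C2 * tvn n"
      using that by (simp add: Qlin distrib_left)
    finally show ?thesis .
  qed
  have low: "HX - log 2 (real (\<Theta> n)) / real n - 1 / ln 2 * (1 / real n) - 2 * C1 * tvn n \<le> a n"
    if "n > 0" for n
  proof -
    have lb: "real n * HX - log 2 (\<Theta> n) - 1 / ln 2 - 2 * tvn n * (real n * C1)
        \<le> (\<Sum>xs\<in>seqs n. \<Sum>ys\<in>seqs n. J n xs ys * L n xs ys)"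
      using lower_bound[OF PX W protn[of n]] by (simp add: HX_def C1_def J_def L_def tvn_def)
    have "(real n * HX - log 2 (\<Theta> n) - 1 / ln 2 - 2 * tvn n * (real n * C1)) / real n \<le> a n"
      unfolding a_def using divide_right_mono[OF lb, of "real n"] by simp
    moreover have "(real n * HX - log 2 (\<Theta> n) - 1 / ln 2 - 2 * tvn n * (real n * C1)) / real n
        = HX - log 2 (real (\<Theta> n)) / real n - 1 / ln 2 * (1 / real n) - 2 * C1 * tvn n"
      using that by (simp add: field_simps)
    ultimately show ?thesis by simp
  qed
  have lowlim: "(\<lambda>n. HX - log 2 (real (\<Theta> n)) / real n - 1 / ln 2 * (1 / real n) - 2 * C1 * tvn n) \<longlonglongrightarrow>
      HX - MI_of PY W - 1 / ln 2 * 0 - 2 * C1 * 0"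
    by (intro tendsto_intros rate tv0 lim_1_over_n)
  then have lowlim': "(\<lambda>n. HX - log 2 (real (\<Theta> n)) / real n - 1 / ln 2 * (1 / real n) - 2 * C1 * tvn n) \<longlonglongrightarrow> G"
    by (simp add: Rst)
  have alim: "a \<longlonglongrightarrow> G"
  proof (rule order_tendstoI)
    fix z assume "z < G"
    from order_tendstoD(1)[OF lowlim' this] eventually_gt_at_top[of 0]
    show "eventually (\<lambda>n. z < a n) sequentially"
    proof eventually_elim
      case (elim n)
      then show ?case using low[OF elim(2)] by linarith
    qed
  next
    fix z assume z: "G < z"
    define \<epsilon> where "\<epsilon> = (z - G) / 2"
    have ep: "\<epsilon> > 0" using z by (simp add: \<epsilon>_def)
    have t2: "(\<lambda>n. 2 * C2 * tvn n) \<longlonglongrightarrow> 0" using tendsto_mult_right_zero[OF tv0, of "2 * C2"] by simp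
    have ev1: "eventually (\<lambda>n. (\<Sum>y\<in>UNIV. Qn n y * gf y) < G + \<epsilon>) sequentially"
      by (rule compact_arg[where W=W and PX=PX]) (use Qpmf QW bnd ep in auto)
    from ev1 order_tendstoD(2)[OF t2 ep] eventually_gt_at_top[of 0]
    show "eventually (\<lambda>n. a n < z) sequentially"
    proof eventually_elim
      case (elim n)
      then show ?case using up[OF elim(3)] elim(1,2) unfolding \<epsilon>_def by argo
    qed
  qed
  have SB: "(\<Sum>x\<in>UNIV. PX x * b x) = (\<Sum>x\<in>UNIV. \<Sum>y\<in>UNIV. PY y * W y x * b x)"
  proof -
    have "PX x = (\<Sum>y\<in>UNIV. PY y * W y x)" for x using PY_in by (simp add: compat_set_def)
    then show ?thesis by (simp add: sum_distrib_right)
  qed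
  have RHS: "(\<Sum>x\<in>UNIV. \<Sum>y\<in>UNIV. PY y * W y x * (- c * log 2 (W y x) + b x)) = c * G + (\<Sum>x\<in>UNIV. PX x * b x)"
  proof -
    have "(\<Sum>x\<in>UNIV. \<Sum>y\<in>UNIV. PY y * W y x * (- c * log 2 (W y x) + b x))
        = (\<Sum>x\<in>UNIV. \<Sum>y\<in>UNIV. c * (PY y * - (W y x * log 2 (W y x)))) + (\<Sum>x\<in>UNIV. \<Sum>y\<in>UNIV. PY y * W y x * b x)"
    proof -
      have "(\<Sum>x\<in>UNIV. \<Sum>y\<in>UNIV. PY y * W y x * (- c * log 2 (W y x) + b x))
          = (\<Sum>x\<in>UNIV. \<Sum>y\<in>UNIV. c * (PY y * - (W y x * log 2 (W y x))) + PY y * W y x * b x)"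
        by (intro sum.cong refl) (simp add: algebra_simps)
      also have "\<dots> = (\<Sum>x\<in>UNIV. \<Sum>y\<in>UNIV. c * (PY y * - (W y x * log 2 (W y x)))) + (\<Sum>x\<in>UNIV. \<Sum>y\<in>UNIV. PY y * W y x * b x)"
        by (simp only: sum.distrib)
      finally show ?thesis .
    qed
    also have "(\<Sum>x\<in>UNIV. \<Sum>y\<in>UNIV. c * (PY y * - (W y x * log 2 (W y x)))) = c * G"
      unfolding G_def gf_def by (subst sum.swap) (simp add: sum_distrib_left)
    finally show ?thesis using SB by simp
  qed
  have LHS: "(\<Sum>xs\<in>seqs n. \<Sum>ys\<in>seqs n. J n xs ys *
            ((1 / real n) * (\<Sum>i<n. - c * log 2 (W (ys ! i) (xs ! i)) + b (xs ! i))))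
        = c * a n + (\<Sum>x\<in>UNIV. PX x * b x)" if "n > 0" for n
  proof -
    have split: "(\<Sum>i<n. - c * log 2 (W (ys ! i) (xs ! i)) + b (xs ! i)) = c * L n xs ys + (\<Sum>i<n. b (xs!i))" for xs ys
    proof -
      have "c * L n xs ys + (\<Sum>i<n. b (xs!i)) = (\<Sum>i<n. c * - log 2 (W (ys!i) (xs!i)) + b (xs!i))"
        by (simp only: L_def sum_distrib_left sum.distrib)
      also have "\<dots> = (\<Sum>i<n. - c * log 2 (W (ys ! i) (xs ! i)) + b (xs ! i))"
        by (intro sum.cong refl) simp
      finally show ?thesis by simp
    qed
    have "(\<Sum>xs\<in>seqs n. \<Sum>ys\<in>seqs n. J n xs ys *
            ((1 / real n) * (\<Sum>i<n. - c * log 2 (W (ys ! i) (xs ! i)) + b (xs ! i))))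
        = (1 / real n) * (c * (\<Sum>xs\<in>seqs n. \<Sum>ys\<in>seqs n. J n xs ys * L n xs ys)
           + (\<Sum>xs\<in>seqs n. \<Sum>ys\<in>seqs n. J n xs ys * (\<Sum>i<n. b (xs!i))))"
    proof -
      have "(\<Sum>xs\<in>seqs n. \<Sum>ys\<in>seqs n. J n xs ys *
            ((1 / real n) * (\<Sum>i<n. - c * log 2 (W (ys ! i) (xs ! i)) + b (xs ! i))))
          = (\<Sum>xs\<in>seqs n. \<Sum>ys\<in>seqs n. (1 / real n) * c * (J n xs ys * L n xs ys) + (1 / real n) * (J n xs ys * (\<Sum>i<n. b (xs!i))))"
        unfolding split by (intro sum.cong refl) (simp add: algebra_simps)
      also have "\<dots> = (1 / real n) * c * (\<Sum>xs\<in>seqs n. \<Sum>ys\<in>seqs n. J n xs ys * L n xs ys)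
           + (1 / real n) * (\<Sum>xs\<in>seqs n. \<Sum>ys\<in>seqs n. J n xs ys * (\<Sum>i<n. b (xs!i)))"
        by (simp only: sum.distrib sum_distrib_left)
      finally show ?thesis by (simp only: distrib_left mult.assoc mult.left_commute)
    qed
    also have "\<dots> = c * a n + (\<Sum>x\<in>UNIV. PX x * b x)"
      unfolding Jmarg[of n b, simplified] a_def using that by (simp add: algebra_simps)
    finally show ?thesis .
  qed
  have "(\<lambda>n. c * a n + (\<Sum>x\<in>UNIV. PX x * b x)) \<longlonglongrightarrow> c * G + (\<Sum>x\<in>UNIV. PX x * b x)"
    by (intro tendsto_intros alim)
  then show ?thesis unfolding RHS
  proof (rule Lim_transform_eventually)
    show "eventually (\<lambda>n. c * a n + (\<Sum>x\<in>UNIV. PX x * b x) = (\<Sum>xs\<in>seqs n. \<Sum>ys\<in>seqs n.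
            joint_dist PX (\<Theta> n) (E n) (D n) xs ys *
            ((1 / real n) * (\<Sum>i<n. - c * log 2 (W (ys ! i) (xs ! i)) + b (xs ! i))))) sequentially"
      using eventually_gt_at_top[of 0]
    proof eventually_elim
      case (elim n)
      show ?case by (rule LHS[OF elim, unfolded J_def, symmetric])
    qed
  qed
qed


end
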